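(* In the mechanism $\mathbb{M}_{\text{1-supply}}$ on a unit-supply two-sided market, if every seller $j\in L$ receives and accepts an offer (i.e. puts her item into the market) with probability exactly $1/2$, then $$2\,\mathrm{ALG}^S\ \ge\ \sum_{j=1}^k\mathbb{E}[w_j]\ \ge\ \mathrm{OPT}^S.$$
   Context: Unit-supply two-sided market: buyers $[n]$, sellers $[k]$, seller $j$ owns only item $j$. Buyer valuations $v_i$ are monotone normalized XOS functions on $2^{[k]}$ drawn independently from public distributions $G_i$; seller values $w_j\ge0$ drawn independently from public distributions $F_j$. For XOS $v$ and $T\subseteq[k]$, $a(v,T,\cdot)$ is a fixed additive function with $a(v,T,T)=v(T)$, $a(v,T,S)\le v(S)$. $\mathbb{A}$ maps buyer profiles $\mathbf v$ to allocations $X^{\mathbb A}(\mathbf v)$ of items to buyers. $\mathrm{SW}^B_j(\mathbf v)=a(v_i,X^{\mathbb A}_i(\mathbf v),\{j\})$ if $j\in X^{\mathbb A}_i(\mathbf v)$, else $0$. $L=\{j:\mathbb{E}[\mathrm{SW}^B_j(\mathbf v)]\ge4\mathbb{E}[w_j]\}$, $p_j=\frac12\mathbb{E}[\mathrm{SW}^B_j(\mathbf v)]$ for $j\in L$. $\mathbb{M}_{\text{1-supply}}$: for each $j\in L$, with probability $q_j=1/(2\Pr[w_j\le p_j])$ offer seller $j$ payment $p_j$; she accepts iff $w_j\le p_j$; $\Lambda_1$ = accepted items. Then buyers $i=1,\dots,n$ in turn pick a utility-maximizing bundle $B_i\subseteq\Lambda_i$ at prices $p_j$, pay $\sum_{j\in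 B_i}p_j$, and $\Lambda_{i+1}=\Lambda_i\setminus B_i$; sellers of bought items receive $p_j$; unbought items stay with their sellers. $\mathrm{ALG}^S=\mathbb{E}[\sum_j w_j\mathbb{I}(\text{item } j\text{ stays with seller }j)]$ in the mechanism's outcome. $\mathrm{OPT}^S$ is the expected sellers' part $\sum_j w_j\mathbb{I}(j\text{ unallocated to buyers})$ of the welfare of a welfare-maximizing allocation (chosen for each valuation profile). *)

theory Defs
  imports "HOL-Probability.Probability"
begin

type_synonym valuation = "nat set \<Rightarrow> real"

definition xos :: "nat \<Rightarrow> valuation \<Rightarrow> bool" where
  "xos k v \<longleftrightarrow> (\<exists>W :: (nat \<Rightarrow> real) set. finite W \<and> W \<noteq> {} \<and>
      (\<forall>f\<in>W. \<forall>j. 0 \<le> f j) \<and>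
      (\<forall>S \<subseteq> {..<k}. v S = Max ((\<lambda>f. \<Sum>j\<in>S. f j) ` W)))"

definition is_alloc :: "nat \<Rightarrow> nat \<Rightarrow> (nat \<Rightarrow> nat set) \<Rightarrow> bool" where
  "is_alloc n k X \<longleftrightarrow> (\<forall>i<n. X i \<subseteq> {..<k}) \<and>
      (\<forall>i<n. \<forall>i'<n. i \<noteq> i' \<longrightarrow> X i \<inter> X i' = {})"

definition welfare :: "nat \<Rightarrow> nat \<Rightarrow> (nat \<Rightarrow> valuation) \<Rightarrow> (nat \<Rightarrow> real) \<Rightarrow> (nat \<Rightarrow> nat set) \<Rightarrow> real" where
  "welfare n k vs ws X = (\<Sum>i<n. vs i (X i)) + (\<Sum>j\<in>{..<k} - (\<Union>i<n. X i). ws j)"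

definition opt_alloc :: "nat \<Rightarrow> nat \<Rightarrow> (nat \<Rightarrow> valuation) \<Rightarrow> (nat \<Rightarrow> real) \<Rightarrow> (nat \<Rightarrow> nat set) \<Rightarrow> bool" where
  "opt_alloc n k vs ws X \<longleftrightarrow> is_alloc n k X \<and>
      (\<forall>Y. is_alloc n k Y \<longrightarrow> welfare n k vs ws Y \<le> welfare n k vs ws X)"

text \<open>Buyer-side welfare contributed by item j under the allocation of algorithm A.\<close>
definition SWB :: "nat \<Rightarrow> (valuation \<Rightarrow> nat set \<Rightarrow> nat set \<Rightarrow> real)
    \<Rightarrow> ((nat \<Rightarrow> valuation) \<Rightarrow> nat \<Rightarrow> nat set) \<Rightarrow> (nat \<Rightarrow> valuation) \<Rightarrow> nat \<Rightarrow> real" where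
  "SWB n a A vs j = (\<Sum>i<n. if j \<in> A vs i then a (vs i) (A vs i) {j} else 0)"

definition ESWB :: "nat \<Rightarrow> (nat \<Rightarrow> valuation measure) \<Rightarrow> (valuation \<Rightarrow> nat set \<Rightarrow> nat set \<Rightarrow> real)
    \<Rightarrow> ((nat \<Rightarrow> valuation) \<Rightarrow> nat \<Rightarrow> nat set) \<Rightarrow> nat \<Rightarrow> real" where
  "ESWB n G a A j = integral\<^sup>L (PiM {..<n} G) (\<lambda>vs. SWB n a A vs j)"

definition Lset :: "nat \<Rightarrow> nat \<Rightarrow> (nat \<Rightarrow> valuation measure) \<Rightarrow> (nat \<Rightarrow> real measure)
    \<Rightarrow> (valuation \<Rightarrow> nat set \<Rightarrow> nat set \<Rightarrow> real) \<Rightarrow> ((nat \<Rightarrow> valuation) \<Rightarrow> nat \<Rightarrow> nat set) \<Rightarrow> nat set" where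
  "Lset n k G F a A = {j \<in> {..<k}. ESWB n G a A j \<ge> 4 * integral\<^sup>L (F j) (\<lambda>x. x)}"

definition price :: "nat \<Rightarrow> (nat \<Rightarrow> valuation measure) \<Rightarrow> (valuation \<Rightarrow> nat set \<Rightarrow> nat set \<Rightarrow> real)
    \<Rightarrow> ((nat \<Rightarrow> valuation) \<Rightarrow> nat \<Rightarrow> nat set) \<Rightarrow> nat \<Rightarrow> real" where
  "price n G a A j = ESWB n G a A j / 2"

definition offer_prob :: "nat \<Rightarrow> (nat \<Rightarrow> valuation measure) \<Rightarrow> (nat \<Rightarrow> real measure)
    \<Rightarrow> (valuation \<Rightarrow> nat set \<Rightarrow> nat set \<Rightarrow> real) \<Rightarrow> ((nat \<Rightarrow> valuation) \<Rightarrow> nat \<Rightarrow> nat set) \<Rightarrow> nat \<Rightarrow> real" where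
  "offer_prob n G F a A j = 1 / (2 * measure (F j) {x \<in> space (F j). x \<le> price n G a A j})"

text \<open>Probability space of the mechanism: buyer valuations, seller values, offer coins
  (coin j = True means seller j receives an offer), all independent.\<close>
definition mech_space :: "nat \<Rightarrow> nat \<Rightarrow> (nat \<Rightarrow> valuation measure) \<Rightarrow> (nat \<Rightarrow> real measure)
    \<Rightarrow> (valuation \<Rightarrow> nat set \<Rightarrow> nat set \<Rightarrow> real) \<Rightarrow> ((nat \<Rightarrow> valuation) \<Rightarrow> nat \<Rightarrow> nat set)
    \<Rightarrow> ((nat \<Rightarrow> valuation) \<times> (nat \<Rightarrow> real) \<times> (nat \<Rightarrow> bool)) measure" where
  "mech_space n k G F a A =
     PiM {..<n} G \<Otimes>\<^sub>M (PiM {..<k} F \<Otimes>\<^sub>M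
       PiM {..<k} (\<lambda>j. measure_pmf (bernoulli_pmf (offer_prob n G F a A j))))"

text \<open>Items still available before buyer i moves (Lambda_{i+1}); buyer i picks
  sel i (v_i) Lambda.\<close>
primrec remaining :: "(nat \<Rightarrow> valuation \<Rightarrow> nat set \<Rightarrow> nat set) \<Rightarrow> (nat \<Rightarrow> valuation)
    \<Rightarrow> nat set \<Rightarrow> nat \<Rightarrow> nat set" where
  "remaining sel vs Lam1 0 = Lam1"
| "remaining sel vs Lam1 (Suc i) = remaining sel vs Lam1 i - sel i (vs i) (remaining sel vs Lam1 i)"

definition accepted :: "nat set \<Rightarrow> (nat \<Rightarrow> real) \<Rightarrow> (nat \<Rightarrow> real) \<Rightarrow> (nat \<Rightarrow> bool) \<Rightarrow> nat set" where
  "accepted L p ws c = {j \<in> L. c j \<and> ws j \<le> p j}"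

definition bought :: "nat \<Rightarrow> (nat \<Rightarrow> valuation \<Rightarrow> nat set \<Rightarrow> nat set) \<Rightarrow> nat set \<Rightarrow> (nat \<Rightarrow> real)
    \<Rightarrow> (nat \<Rightarrow> valuation) \<Rightarrow> (nat \<Rightarrow> real) \<Rightarrow> (nat \<Rightarrow> bool) \<Rightarrow> nat set" where
  "bought n sel L p vs ws c =
     accepted L p ws c - remaining sel vs (accepted L p ws c) n"

definition ALG_S where
  "ALG_S n k G F a A sel =
     (\<integral>\<^sup>+ \<omega>. ennreal (case \<omega> of (vs, ws, c) \<Rightarrow>
         \<Sum>j<k. if j \<notin> bought n sel (Lset n k G F a A) (price n G a A) vs ws c then ws j else 0)
       \<partial>mech_space n k G F a A)"

definition OPT_S where
  "OPT_S n k G F opt =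
     (\<integral>\<^sup>+ \<omega>. ennreal (case \<omega> of (vs, ws) \<Rightarrow>
         \<Sum>j\<in>{..<k} - (\<Union>i<n. opt vs ws i). ws j)
       \<partial>(PiM {..<n} G \<Otimes>\<^sub>M PiM {..<k} F))"

end

theory Submission
  imports Defs
begin

lemma distr_snd_prob:
  assumes "prob_space M" "prob_space N"
  shows "distr (M \<Otimes>\<^sub>M N) N snd = N"
proof (intro measure_eqI)
  interpret M: prob_space M by fact
  interpret N: prob_space N by fact
  interpret pair_sigma_finite M N ..
  fix A assume A: "A \<in> sets (distr (M \<Otimes>\<^sub>M N) N snd)"
  then have "emeasure (distr (M \<Otimes>\<^sub>M N) N snd) A = emeasure (M \<Otimes>\<^sub>M N) (space M \<times> A)"
    by (auto simp add: emeasure_distr space_pair_measure dest: sets.sets_into_space intro!: arg_cong2[where f=emeasure])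
  also have "\<dots> = emeasure M (space M) * emeasure N A"
    by (rule N.emeasure_pair_measure_Times) (use A in auto)
  finally show "emeasure (distr (M \<Otimes>\<^sub>M N) N snd) A = emeasure N A"
    by (simp add: M.emeasure_space_1)
qed simp

lemma distr_pair_comp:
  assumes F: "\<And>j. j\<in>K \<Longrightarrow> prob_space (F j)" and B: "\<And>j. j\<in>K \<Longrightarrow> prob_space (B j)" and j: "j\<in>K"
  shows "distr (PiM K F \<Otimes>\<^sub>M PiM K B) (F j \<Otimes>\<^sub>M B j) (\<lambda>(x,y). (x j, y j)) = F j \<Otimes>\<^sub>M B j"
proof -
  have 1: "distr (PiM K F) (F j) (\<lambda>x. x j) = F j" by (rule distr_PiM_component) (use F j in auto)
  have 2: "distr (PiM K B) (B j) (\<lambda>x. x j) = B j" by (rule distr_PiM_component) (use B j in auto)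
  interpret Bj: prob_space "B j" using B j by auto
  have "distr (PiM K F) (F j) (\<lambda>x. x j) \<Otimes>\<^sub>M distr (PiM K B) (B j) (\<lambda>x. x j)
      = distr (PiM K F \<Otimes>\<^sub>M PiM K B) (F j \<Otimes>\<^sub>M B j) (\<lambda>(x,y). (x j, y j))"
    apply (rule pair_measure_distr)
    using j apply measurable
    apply (simp add: 2) using Bj.sigma_finite_measure_axioms .
  then show ?thesis using 1 2 by simp
qed

lemma mech_marg:
  assumes P: "prob_space P" and F: "\<And>j. j\<in>K \<Longrightarrow> prob_space (F j)" and B: "\<And>j. j\<in>K \<Longrightarrow> prob_space (B j)" and j: "j\<in>K"
  shows "distr (P \<Otimes>\<^sub>M (PiM K F \<Otimes>\<^sub>M PiM K B)) (F j \<Otimes>\<^sub>M B j) (\<lambda>\<omega>. (fst (snd \<omega>) j, snd (snd \<omega>) j)) = F j \<Otimes>\<^sub>M B j"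
proof -
  have pq: "prob_space (PiM K F \<Otimes>\<^sub>M PiM K B)"
    by (intro prob_space_pair prob_space_PiM) (use F B in auto)
  have eq1: "distr (distr (P \<Otimes>\<^sub>M (PiM K F \<Otimes>\<^sub>M PiM K B)) (PiM K F \<Otimes>\<^sub>M PiM K B) snd) (F j \<Otimes>\<^sub>M B j) (\<lambda>(x,y). (x j, y j))
     = distr (P \<Otimes>\<^sub>M (PiM K F \<Otimes>\<^sub>M PiM K B)) (F j \<Otimes>\<^sub>M B j) ((\<lambda>(x,y). (x j, y j)) \<circ> snd)"
    apply (rule distr_distr) using j by measurable
  have eq2: "((\<lambda>(x,y). (x j, y j)) \<circ> snd) = (\<lambda>\<omega>. (fst (snd \<omega>) j, snd (snd \<omega>) j))"
    by (auto simp: fun_eq_iff split: prod.splits)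
  have "distr (P \<Otimes>\<^sub>M (PiM K F \<Otimes>\<^sub>M PiM K B)) (F j \<Otimes>\<^sub>M B j) (\<lambda>\<omega>. (fst (snd \<omega>) j, snd (snd \<omega>) j))
     = distr (P \<Otimes>\<^sub>M (PiM K F \<Otimes>\<^sub>M PiM K B)) (F j \<Otimes>\<^sub>M B j) ((\<lambda>(x,y). (x j, y j)) \<circ> snd)"
    by (simp only: eq2)
  also have "\<dots> = distr (distr (P \<Otimes>\<^sub>M (PiM K F \<Otimes>\<^sub>M PiM K B)) (PiM K F \<Otimes>\<^sub>M PiM K B) snd) (F j \<Otimes>\<^sub>M B j) (\<lambda>(x,y). (x j, y j))"
    by (simp only: eq1)
  also have "\<dots> = distr (PiM K F \<Otimes>\<^sub>M PiM K B) (F j \<Otimes>\<^sub>M B j) (\<lambda>(x,y). (x j, y j))"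
    by (simp only: distr_snd_prob[OF P pq])
  also have "\<dots> = F j \<Otimes>\<^sub>M B j" by (rule distr_pair_comp) (use F B j in auto)
  finally show ?thesis .
qed

lemma cheb:
  fixes M :: "real measure" and p :: real
  assumes P: "prob_space M" and S: "sets M = sets borel" and I: "integrable M (\<lambda>x. x)"
  shows "integral\<^sup>L M (\<lambda>x. x * indicator {..p} x) \<le> measure M {..p} * integral\<^sup>L M (\<lambda>x. x)"
proof -
  interpret prob_space M by fact
  have sp: "space M = UNIV" using sets_eq_imp_space_eq[OF S] by simp
  have Ssets: "{..p} \<in> sets M" using S by simp
  let ?P = "measure M {..p}"
  have P01: "0 \<le> ?P" "?P \<le> 1" by auto
  have i1: "integrable M (\<lambda>x. x * indicator {..p} x)"
    by (rule integrable_real_mult_indicator[OF Ssets I])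
  have i2: "integrable M (indicator {..p} :: real \<Rightarrow> real)"
    using Ssets sp by (simp add: integrable_indicator_iff less_top[symmetric])
  have eq: "(\<lambda>x. (x - p) * (indicator {..p} x - ?P)) =
     (\<lambda>x. (x * indicator {..p} x - ?P * x) - (p * indicator {..p} x - p * ?P))"
    by (auto simp: fun_eq_iff algebra_simps)
  have "integral\<^sup>L M (\<lambda>x. (x - p) * (indicator {..p} x - ?P)) \<le> integral\<^sup>L M (\<lambda>x. 0)"
  proof (rule integral_mono)
    show "integrable M (\<lambda>x. (x - p) * (indicator {..p} x - ?P))"
      unfolding eq using i1 i2 I by (intro Bochner_Integration.integrable_diff integrable_mult_right) auto
    show "integrable M (\<lambda>x. 0::real)" by simp
    fix x show "(x - p) * (indicator {..p} x - ?P) \<le> 0"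
    proof (cases "x \<le> p")
      case True then show ?thesis using P01 by (simp add: mult_nonpos_nonneg)
      next
      case False then show ?thesis using P01 by (simp add: mult_nonneg_nonpos)
    qed
  qed
  also have "integral\<^sup>L M (\<lambda>x. (x - p) * (indicator {..p} x - ?P)) =
     integral\<^sup>L M (\<lambda>x. x * indicator {..p} x) - ?P * integral\<^sup>L M (\<lambda>x. x)"
  proof -
    have "integral\<^sup>L M (\<lambda>x. (x - p) * (indicator {..p} x - ?P)) =
      (integral\<^sup>L M (\<lambda>x. x * indicator {..p} x) - integral\<^sup>L M (\<lambda>x. ?P * x))
       - (integral\<^sup>L M (\<lambda>x. p * indicator {..p} x) - integral\<^sup>L M (\<lambda>x. p * ?P))"
      unfolding eq using i1 i2 I
      by (subst Bochner_Integration.integral_diff Bochner_Integration.integral_diff; (intro Bochner_Integration.integrable_diff integrable_mult_right)?; auto)+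
    also have "\<dots> = integral\<^sup>L M (\<lambda>x. x * indicator {..p} x) - ?P * integral\<^sup>L M (\<lambda>x. x)"
      using sp prob_space by simp
    finally show ?thesis .
  qed
  finally show ?thesis by simp
qed

lemma item_bound:
  fixes M :: "real measure" and b :: "bool pmf" and p :: real and inL :: bool
  assumes P: "prob_space M" and S: "sets M = sets borel" and nn: "AE x in M. 0 \<le> x"
    and I: "integrable M (\<lambda>x. x)"
    and half: "inL \<Longrightarrow> measure (M \<Otimes>\<^sub>M measure_pmf b) ({..p} \<times> {True}) = 1/2"
  shows "ennreal (integral\<^sup>L M (\<lambda>x. x) / 2) \<le>
    (\<integral>\<^sup>+ z. ennreal (if inL \<and> snd z \<and> fst z \<le> p then 0 else fst z) \<partial>(M \<Otimes>\<^sub>M measure_pmf b))"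
proof -
  interpret prob_space M by fact
  interpret B: prob_space "measure_pmf b" by (rule prob_space_measure_pmf)
  interpret pair_sigma_finite M "measure_pmf b" ..
  let ?g = "\<lambda>z. ennreal (if inL \<and> snd z \<and> fst z \<le> p then 0 else fst z)"
  let ?E = "integral\<^sup>L M (\<lambda>x. x)"
  let ?qT = "pmf b True"
  have sp: "space M = UNIV" using sets_eq_imp_space_eq[OF S] by simp
  have meas0: "?g \<in> borel_measurable (borel \<Otimes>\<^sub>M count_space UNIV)" by measurable
  have meas: "?g \<in> borel_measurable (M \<Otimes>\<^sub>M measure_pmf b)"
    using meas0 by (subst measurable_cong_sets[OF sets_pair_measure_cong[OF S sets_measure_pmf_count_space] refl]) 
  have q1: "pmf b True + pmf b False = 1"
  proof -
    have "set_pmf b \<subseteq> {False, True}" by auto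
    then show ?thesis using sum_pmf_eq_1[of "{False, True}" b] by (simp add: add.commute)
  qed
  have inner: "(\<integral>\<^sup>+ y. ?g (x, y) \<partial>measure_pmf b) = ?g (x, True) * ?qT + ?g (x, False) * pmf b False" for x
    by (subst nn_integral_measure_pmf_support[of UNIV]) (auto simp: UNIV_bool)
  have E0: "0 \<le> ?E" using nn by (rule integral_nonneg_AE)
  have Eeq: "(\<integral>\<^sup>+ x. ennreal x \<partial>M) = ennreal ?E" by (rule nn_integral_eq_integral[OF I nn])
  have RHS: "(\<integral>\<^sup>+ z. ?g z \<partial>(M \<Otimes>\<^sub>M measure_pmf b)) = (\<integral>\<^sup>+ x. \<integral>\<^sup>+ y. ?g (x, y) \<partial>measure_pmf b \<partial>M)"
    by (rule measure_pmf.nn_integral_fst[OF meas, symmetric])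
  show ?thesis
  proof (cases inL)
    case False
    have "(\<integral>\<^sup>+ x. \<integral>\<^sup>+ y. ?g (x, y) \<partial>measure_pmf b \<partial>M) = (\<integral>\<^sup>+ x. ennreal x \<partial>M)"
      apply (rule nn_integral_cong) unfolding inner using False q1
      by (simp add: distrib_left[symmetric] ennreal_plus[symmetric])
    then show ?thesis using RHS Eeq E0 by (simp add: ennreal_leI)
  next
    case True
    let ?h = "\<lambda>x. x - ?qT * (x * indicator {..p} x)"
    have qle: "?qT \<le> 1" by (rule pmf_le_1)
    have "(\<integral>\<^sup>+ x. \<integral>\<^sup>+ y. ?g (x, y) \<partial>measure_pmf b \<partial>M) = (\<integral>\<^sup>+ x. ennreal (?h x) \<partial>M)"
    proof (rule nn_integral_cong_AE)
      show "AE x in M. (\<integral>\<^sup>+ y. ?g (x, y) \<partial>measure_pmf b) = ennreal (?h x)"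
        using nn
      proof eventually_elim
        case (elim x)
        show ?case
        proof (cases "x \<le> p")
          case True
          have qF: "pmf b False = 1 - ?qT" using q1 by simp
          from True have "?h x = x * pmf b False" unfolding qF by (simp add: algebra_simps)
          then show ?thesis unfolding inner using True \<open>inL\<close> elim by (simp add: ennreal_mult)
        next
          case False
          have qF: "pmf b False = 1 - ?qT" using q1 by simp
          from False have "?h x = x * ?qT + x * pmf b False" unfolding qF by (simp add: algebra_simps)
          moreover have "ennreal x * ennreal ?qT + ennreal x * ennreal (pmf b False) = ennreal (x * ?qT + x * pmf b False)"
            using elim by (simp add: ennreal_plus ennreal_mult)
          ultimately show ?thesis unfolding inner using False \<open>inL\<close> elim by simp
        qed
      qed
    qed
    also have "\<dots> = ennreal (integral\<^sup>L M ?h)"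
    proof (rule nn_integral_eq_integral)
      have i1: "integrable M (\<lambda>x. x * indicator {..p} x)"
        by (rule integrable_real_mult_indicator) (use S I in auto)
      show "integrable M ?h" using I i1 by (intro Bochner_Integration.integrable_diff integrable_mult_right)
      show "AE x in M. 0 \<le> ?h x" using nn
      proof eventually_elim
        case (elim x)
        have "?qT * (x * indicator {..p} x) \<le> 1 * x"
          apply (rule mult_mono) using qle elim by (auto simp: indicator_def)
        then show ?case by simp
      qed
    qed
    also have "integral\<^sup>L M ?h = ?E - ?qT * integral\<^sup>L M (\<lambda>x. x * indicator {..p} x)"
    proof -
      have i1: "integrable M (\<lambda>x. x * indicator {..p} x)"
        by (rule integrable_real_mult_indicator) (use S I in auto)
      show ?thesis using I i1 by simp
    qed
    finally have R: "(\<integral>\<^sup>+ z. ?g z \<partial>(M \<Otimes>\<^sub>M measure_pmf b)) = ennreal (?E - ?qT * integral\<^sup>L M (\<lambda>x. x * indicator {..p} x))"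
      using RHS by simp
    have "measure (M \<Otimes>\<^sub>M measure_pmf b) ({..p} \<times> {True}) = measure M {..p} * ?qT"
    proof -
      have "emeasure (M \<Otimes>\<^sub>M measure_pmf b) ({..p} \<times> {True}) = emeasure M {..p} * emeasure (measure_pmf b) {True}"
        by (rule measure_pmf.emeasure_pair_measure_Times) (use S in auto)
      then show ?thesis
      by (simp add: measure_def enn2real_mult measure_pmf_single[symmetric] del: measure_pmf_single)
    qed
    then have hq: "measure M {..p} * ?qT = 1/2" using half True by simp
    have ch: "integral\<^sup>L M (\<lambda>x. x * indicator {..p} x) \<le> measure M {..p} * ?E"
      by (rule cheb[OF P S I])
    have "?qT * integral\<^sup>L M (\<lambda>x. x * indicator {..p} x) \<le> ?qT * (measure M {..p} * ?E)"
      by (rule mult_left_mono[OF ch]) simp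
    also have "\<dots> = ?E / 2" using hq by (simp add: algebra_simps)
    finally show ?thesis unfolding R by (intro ennreal_leI) simp
  qed
qed


lemma g_meas:
  fixes Fj :: "real measure" and b :: "bool pmf"
  assumes S: "sets Fj = sets borel"
  shows "(\<lambda>z. ennreal (if inL \<and> snd z \<and> fst z \<le> p then 0 else fst z)) \<in> borel_measurable (Fj \<Otimes>\<^sub>M measure_pmf b)"
proof -
  have "(\<lambda>z::real\<times>bool. ennreal (if inL \<and> snd z \<and> fst z \<le> p then 0 else fst z)) \<in> borel_measurable (borel \<Otimes>\<^sub>M count_space UNIV)" by measurable
  then show ?thesis
    by (subst measurable_cong_sets[OF sets_pair_measure_cong[OF S sets_measure_pmf_count_space] refl])
qed

theorem lemma1:
  fixes n k :: nat
    and G :: "nat \<Rightarrow> valuation measure"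
    and F :: "nat \<Rightarrow> real measure"
    and a :: "valuation \<Rightarrow> nat set \<Rightarrow> nat set \<Rightarrow> real"
    and A :: "(nat \<Rightarrow> valuation) \<Rightarrow> nat \<Rightarrow> nat set"
    and sel :: "nat \<Rightarrow> valuation \<Rightarrow> nat set \<Rightarrow> nat set"
    and opt :: "(nat \<Rightarrow> valuation) \<Rightarrow> (nat \<Rightarrow> real) \<Rightarrow> nat \<Rightarrow> nat set"
  assumes G_prob: "\<forall>i<n. prob_space (G i)"
    and G_xos: "\<forall>i<n. AE v in G i. xos k v"
    and F_prob: "\<forall>j<k. prob_space (F j)"
    and F_borel: "\<forall>j<k. sets (F j) = sets borel"
    and F_nonneg: "\<forall>j<k. AE x in F j. 0 \<le> x"
    and F_int: "\<forall>j<k. integrable (F j) (\<lambda>x. x)"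
    and a_additive: "\<forall>v T S. xos k v \<longrightarrow> T \<subseteq> {..<k} \<longrightarrow> S \<subseteq> {..<k} \<longrightarrow>
                       a v T S = (\<Sum>j\<in>S. a v T {j})"
    and a_nonneg: "\<forall>v T j. xos k v \<longrightarrow> T \<subseteq> {..<k} \<longrightarrow> j < k \<longrightarrow> 0 \<le> a v T {j}"
    and a_T: "\<forall>v T. xos k v \<longrightarrow> T \<subseteq> {..<k} \<longrightarrow> a v T T = v T"
    and a_le: "\<forall>v T S. xos k v \<longrightarrow> T \<subseteq> {..<k} \<longrightarrow> S \<subseteq> {..<k} \<longrightarrow> a v T S \<le> v S"
    and A_alloc: "\<forall>vs. is_alloc n k (A vs)"
    and sel_best: "\<forall>i<n. \<forall>v Lam. Lam \<subseteq> Lset n k G F a A \<longrightarrow>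
                     sel i v Lam \<subseteq> Lam \<and>
                     (\<forall>B \<subseteq> Lam. v B - (\<Sum>j\<in>B. price n G a A j)
                         \<le> v (sel i v Lam) - (\<Sum>j\<in>sel i v Lam. price n G a A j))"
    and opt_best: "\<forall>vs ws. opt_alloc n k vs ws (opt vs ws)"
    and half: "\<forall>j\<in>Lset n k G F a A.
                 measure (mech_space n k G F a A)
                   {\<omega> \<in> space (mech_space n k G F a A).
                      case \<omega> of (vs, ws, c) \<Rightarrow> c j \<and> ws j \<le> price n G a A j} = 1/2"
  shows "2 * ALG_S n k G F a A sel \<ge> ennreal (\<Sum>j<k. integral\<^sup>L (F j) (\<lambda>x. x))
       \<and> ennreal (\<Sum>j<k. integral\<^sup>L (F j) (\<lambda>x. x)) \<ge> OPT_S n k G F opt"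
  proof -
  define PG where "PG = PiM {..<n} G"
  define PF where "PF = PiM {..<k} F"
  define b where "b j = bernoulli_pmf (offer_prob n G F a A j)" for j
  define PB where "PB = PiM {..<k} (\<lambda>j. measure_pmf (b j))"
  define M where "M = mech_space n k G F a A"
  define L where "L = Lset n k G F a A"
  define p where "p = price n G a A"
  define T where "T j = (\<lambda>\<omega>::((nat \<Rightarrow> valuation) \<times> (nat \<Rightarrow> real) \<times> (nat \<Rightarrow> bool)). (fst (snd \<omega>) j, snd (snd \<omega>) j))" for j
  define E where "E j = integral\<^sup>L (F j) (\<lambda>x. x)" for j
  have M_eq: "M = PG \<Otimes>\<^sub>M (PF \<Otimes>\<^sub>M PB)"
    unfolding M_def mech_space_def PG_def PF_def PB_def b_def ..
  have PGp: "prob_space PG" unfolding PG_def by (rule prob_space_PiM) (use G_prob in auto)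
  have PFp: "prob_space PF" unfolding PF_def by (rule prob_space_PiM) (use F_prob in auto)
  have Fsp: "space (F j) = UNIV" if "j < k" for j
    using sets_eq_imp_space_eq[of "F j" borel] F_borel that by simp
  have marg: "distr M (F j \<Otimes>\<^sub>M measure_pmf (b j)) (T j) = F j \<Otimes>\<^sub>M measure_pmf (b j)" if j: "j < k" for j
    unfolding M_eq PF_def PB_def T_def
    by (rule mech_marg) (use PGp F_prob j prob_space_measure_pmf in auto)
  have Tmeas: "T j \<in> measurable M (F j \<Otimes>\<^sub>M measure_pmf (b j))" if j: "j < k" for j
  proof -
    have jj: "j \<in> {..<k}" using j by simp
    show ?thesis unfolding M_eq PF_def PB_def T_def using jj by measurable
  qed
  have AEF: "AE \<omega> in M. 0 \<le> fst (snd \<omega>) j" if j: "j < k" for j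
  proof -
    have "AE x in distr (F j \<Otimes>\<^sub>M measure_pmf (b j)) (F j) fst. 0 \<le> x"
      unfolding measure_pmf.distr_pair_fst[of "F j" "b j"] using F_nonneg j by simp
    then have "AE z in F j \<Otimes>\<^sub>M measure_pmf (b j). 0 \<le> fst z"
      by (rule AE_distrD[rotated]) simp
    then have "AE z in distr M (F j \<Otimes>\<^sub>M measure_pmf (b j)) (T j). 0 \<le> fst z"
      unfolding marg[OF j] .
    then have "AE \<omega> in M. 0 \<le> fst (T j \<omega>)" by (rule AE_distrD[OF Tmeas[OF j]])
    then show ?thesis by (simp add: T_def)
  qed
  have AEall: "AE \<omega> in M. \<forall>j\<in>{..<k}. 0 \<le> fst (snd \<omega>) j"
    using AEF by (subst AE_finite_all) auto
  have E0: "0 \<le> E j" if "j < k" for j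
    unfolding E_def by (rule integral_nonneg_AE) (use F_nonneg that in auto)
  let ?g = "\<lambda>j z. ennreal (if j \<in> L \<and> snd z \<and> fst z \<le> p j then 0 else fst z)"
  have item: "ennreal (E j / 2) \<le> (\<integral>\<^sup>+ \<omega>. ?g j (T j \<omega>) \<partial>M)" if j: "j < k" for j
  proof -
    have gm: "?g j \<in> borel_measurable (F j \<Otimes>\<^sub>M measure_pmf (b j))"
      by (rule g_meas) (use F_borel j in auto)
    have "ennreal (E j / 2) \<le> (\<integral>\<^sup>+ z. ?g j z \<partial>(F j \<Otimes>\<^sub>M measure_pmf (b j)))"
      unfolding E_def
    proof (rule item_bound)
      show "prob_space (F j)" "sets (F j) = sets borel" "AE x in F j. 0 \<le> x" "integrable (F j) (\<lambda>x. x)"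
        using F_prob F_borel F_nonneg F_int j by auto
      assume jL: "j \<in> L"
      have ev: "{..p j} \<times> {True} \<in> sets (F j \<Otimes>\<^sub>M measure_pmf (b j))"
        using F_borel j by simp
      have "measure (F j \<Otimes>\<^sub>M measure_pmf (b j)) ({..p j} \<times> {True})
          = measure (distr M (F j \<Otimes>\<^sub>M measure_pmf (b j)) (T j)) ({..p j} \<times> {True})"
        unfolding marg[OF j] ..
      also have "\<dots> = measure M (T j -` ({..p j} \<times> {True}) \<inter> space M)"
        by (rule measure_distr[OF Tmeas[OF j]]) (use ev in simp)
      also have "T j -` ({..p j} \<times> {True}) \<inter> space M =
         {\<omega> \<in> space M. case \<omega> of (vs, ws, c) \<Rightarrow> c j \<and> ws j \<le> p j}"
        by (auto simp: T_def)
      also have "measure M \<dots> = 1/2"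
        using half jL unfolding M_def L_def p_def by simp
      finally show "measure (F j \<Otimes>\<^sub>M measure_pmf (b j)) ({..p j} \<times> {True}) = 1/2" .
    qed
    also have "\<dots> = (\<integral>\<^sup>+ z. ?g j z \<partial>distr M (F j \<Otimes>\<^sub>M measure_pmf (b j)) (T j))"
      unfolding marg[OF j] ..
    also have "\<dots> = (\<integral>\<^sup>+ \<omega>. ?g j (T j \<omega>) \<partial>M)"
      by (rule nn_integral_distr[OF Tmeas[OF j]]) (use gm in simp)
    finally show ?thesis .
  qed
  have gTm: "(\<lambda>\<omega>. ?g j (T j \<omega>)) \<in> borel_measurable M" if j: "j < k" for j
    using measurable_compose[OF Tmeas[OF j] g_meas[of "F j" "j \<in> L" "p j" "b j"]] F_borel j by simp
  have "ennreal (\<Sum>j<k. E j / 2) = (\<Sum>j<k. ennreal (E j / 2))"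
    using E0 by (subst sum_ennreal) auto
  also have "\<dots> \<le> (\<Sum>j<k. \<integral>\<^sup>+ \<omega>. ?g j (T j \<omega>) \<partial>M)"
    by (rule sum_mono) (use item in auto)
  also have "\<dots> = (\<integral>\<^sup>+ \<omega>. (\<Sum>j<k. ?g j (T j \<omega>)) \<partial>M)"
    by (rule nn_integral_sum[symmetric]) (use gTm in auto)
  also have "\<dots> \<le> ALG_S n k G F a A sel"
    unfolding ALG_S_def M_def[symmetric] L_def[symmetric] p_def[symmetric]
  proof (rule nn_integral_mono_AE)
    show "AE \<omega> in M. (\<Sum>j<k. ?g j (T j \<omega>)) \<le> ennreal (case \<omega> of (vs, ws, c) \<Rightarrow>
         \<Sum>j<k. if j \<notin> bought n sel L p vs ws c then ws j else 0)"
      using AEall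
    proof eventually_elim
      case (elim \<omega>)
      obtain vs ws c where om: "\<omega> = (vs, ws, c)" by (cases \<omega>) auto
      have nn: "\<forall>j<k. 0 \<le> ws j" using elim om by auto
      have "(\<Sum>j<k. ?g j (T j \<omega>)) \<le> (\<Sum>j<k. ennreal (if j \<notin> bought n sel L p vs ws c then ws j else 0))"
      proof (rule sum_mono)
        fix j assume "j \<in> {..<k}"
        then show "?g j (T j \<omega>) \<le> ennreal (if j \<notin> bought n sel L p vs ws c then ws j else 0)"
          using nn by (auto simp: om T_def bought_def accepted_def)
      qed
      also have "\<dots> = ennreal (\<Sum>j<k. if j \<notin> bought n sel L p vs ws c then ws j else 0)"
        using nn by (subst sum_ennreal) auto
      finally show ?case by (simp add: om)
    qed
  qed
  finally have half_le: "ennreal (\<Sum>j<k. E j / 2) \<le> ALG_S n k G F a A sel" .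
  have "ennreal (\<Sum>j<k. E j) = 2 * ennreal (\<Sum>j<k. E j / 2)"
  proof -
    have "(\<Sum>j<k. E j) = 2 * (\<Sum>j<k. E j / 2)" by (simp add: sum_distrib_left)
    moreover have "0 \<le> (\<Sum>j<k. E j / 2)" using E0 by (intro sum_nonneg) auto
    ultimately show ?thesis by (simp add: ennreal_mult)
  qed
  also have "\<dots> \<le> 2 * ALG_S n k G F a A sel" by (rule mult_left_mono[OF half_le]) simp
  finally have part1: "ennreal (\<Sum>j<k. E j) \<le> 2 * ALG_S n k G F a A sel" .
  define N where "N = PG \<Otimes>\<^sub>M PF"
  have margN: "distr N (F j) (\<lambda>\<omega>. snd \<omega> j) = F j" if j: "j < k" for j
  proof -
    have "distr N (F j) (\<lambda>\<omega>. snd \<omega> j) = distr N (F j) ((\<lambda>x. x j) \<circ> snd)"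
      by (simp add: comp_def)
    also have "\<dots> = distr (distr N PF snd) (F j) (\<lambda>x. x j)"
      by (rule distr_distr[symmetric]) (use j in \<open>unfold N_def PF_def, measurable\<close>)
    also have "\<dots> = distr PF (F j) (\<lambda>x. x j)"
      unfolding N_def by (simp only: distr_snd_prob[OF PGp PFp])
    also have "\<dots> = F j" unfolding PF_def
      by (rule distr_PiM_component) (use F_prob j in auto)
    finally show ?thesis .
  qed
  have Nm: "(\<lambda>\<omega>. snd \<omega> j) \<in> measurable N (F j)" if j: "j < k" for j
  proof -
    have jj: "j \<in> {..<k}" using j by simp
    show ?thesis unfolding N_def PF_def using jj by measurable
  qed
  have enm: "(\<lambda>x. ennreal x) \<in> borel_measurable (F j)" if j: "j < k" for j
  proof -
    have Fb: "sets (F j) = sets borel" using F_borel j by auto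
    show ?thesis unfolding measurable_cong_sets[OF Fb refl] by measurable
  qed
  have AEN: "AE \<omega> in N. \<forall>j\<in>{..<k}. 0 \<le> snd \<omega> j"
  proof (subst AE_finite_all, simp, intro ballI)
    fix j assume "j \<in> {..<k}"
    then have j: "j < k" by simp
    have "AE x in distr N (F j) (\<lambda>\<omega>. snd \<omega> j). 0 \<le> x" unfolding margN[OF j] using F_nonneg j by simp
    then show "AE \<omega> in N. 0 \<le> snd \<omega> j" by (rule AE_distrD[OF Nm[OF j]])
  qed
  have "OPT_S n k G F opt \<le> (\<integral>\<^sup>+ \<omega>. (\<Sum>j<k. ennreal (snd \<omega> j)) \<partial>N)"
    unfolding OPT_S_def PG_def[symmetric] PF_def[symmetric] N_def[symmetric]
  proof (rule nn_integral_mono_AE)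
    show "AE \<omega> in N. ennreal (case \<omega> of (vs, ws) \<Rightarrow> \<Sum>j\<in>{..<k} - (\<Union>i<n. opt vs ws i). ws j)
        \<le> (\<Sum>j<k. ennreal (snd \<omega> j))"
      using AEN
    proof eventually_elim
      case (elim \<omega>)
      obtain vs ws where om: "\<omega> = (vs, ws)" by (cases \<omega>) auto
      have nn: "\<forall>j\<in>{..<k}. 0 \<le> ws j" using elim om by auto
      have "(\<Sum>j\<in>{..<k} - (\<Union>i<n. opt vs ws i). ws j) \<le> (\<Sum>j<k. ws j)"
        by (rule sum_mono2) (use nn in auto)
      then have "ennreal (\<Sum>j\<in>{..<k} - (\<Union>i<n. opt vs ws i). ws j) \<le> ennreal (\<Sum>j<k. ws j)"
        by (rule ennreal_leI)
      also have "\<dots> = (\<Sum>j<k. ennreal (ws j))" using nn by (subst sum_ennreal) auto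
      finally show ?case by (simp add: om)
    qed
  qed
  also have "\<dots> = (\<Sum>j<k. \<integral>\<^sup>+ \<omega>. ennreal (snd \<omega> j) \<partial>N)"
  proof (rule nn_integral_sum)
    fix j assume "j \<in> {..<k}"
    then have j: "j < k" by simp
    have "(\<lambda>x. ennreal x) \<in> borel_measurable (F j)" by (rule enm[OF j])
    then show "(\<lambda>\<omega>. ennreal (snd \<omega> j)) \<in> borel_measurable N"
      using measurable_compose[OF Nm[OF j]] by blast
  qed
  also have "\<dots> = (\<Sum>j<k. ennreal (E j))"
  proof (rule sum.cong[OF refl])
    fix j assume "j \<in> {..<k}"
    then have j: "j < k" by simp
    have "(\<integral>\<^sup>+ \<omega>. ennreal (snd \<omega> j) \<partial>N) = (\<integral>\<^sup>+ x. ennreal x \<partial>distr N (F j) (\<lambda>\<omega>. snd \<omega> j))"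
    proof (rule nn_integral_distr[symmetric, OF Nm[OF j]])
      have "sets (distr N (F j) (\<lambda>\<omega>. snd \<omega> j)) = sets (F j)" by simp
      then show "(\<lambda>x. ennreal x) \<in> borel_measurable (distr N (F j) (\<lambda>\<omega>. snd \<omega> j))"
        using enm[OF j] measurable_cong_sets[of "distr N (F j) (\<lambda>\<omega>. snd \<omega> j)" "F j" borel borel] by simp
    qed
    also have "\<dots> = (\<integral>\<^sup>+ x. ennreal x \<partial>F j)" unfolding margN[OF j] ..
    also have "\<dots> = ennreal (E j)" unfolding E_def
      by (rule nn_integral_eq_integral) (use F_int F_nonneg j in auto)
    finally show "(\<integral>\<^sup>+ \<omega>. ennreal (snd \<omega> j) \<partial>N) = ennreal (E j)" .
  qed
  also have "\<dots> = ennreal (\<Sum>j<k. E j)" using E0 by (subst sum_ennreal) auto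
  finally have part2: "OPT_S n k G F opt \<le> ennreal (\<Sum>j<k. E j)" .
  show ?thesis using part1 part2 unfolding E_def by (intro conjI)
qed

end
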